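(* For every $\varphi\in\mathcal{L}_{CoRGAL}$, if $\varphi$ is valid then $\varphi\in\mathbf{CoRGAL}$.
   Context: Fix a finite set $A$ of agents and a countable set $P$ of propositional variables. The language $\mathcal{L}_{CoRGAL}$ is given by $\varphi ::= p \mid \neg\varphi \mid (\varphi\wedge\varphi) \mid K_a\varphi \mid [\varphi]\varphi \mid [G,\varphi]\varphi \mid [\langle G\rangle]\varphi$ with $p\in P$, $a\in A$, $G\subseteq A$. $\mathcal{L}_{EL}$ is the fragment built only from $p,\neg,\wedge,K_a$. Duals: $\langle\psi\rangle\varphi:=\neg[\psi]\neg\varphi$, $\langle G,\psi\rangle\varphi:=\neg[G,\psi]\neg\varphi$. $\mathcal{L}^G_{EL}$ is the set of formulas $\bigwedge_{i\in G}K_i\varphi_i$ with $\varphi_i\in\mathcal{L}_{EL}$; $\psi_G,\chi_G$ range over it. Semantics over epistemic models $M=(W,\sim,V)$ ($W\ne\emptyset$, $\sim_a$ equivalence relations, $V:P\to\mathcal{P}(W)$; $M^\varphi$ the restriction to $\{v:(M,v)\models\varphi\}$): standard for $p,\neg,\wedge,K_a$; $[\varphi]\psi$ holds at $w$ iff $(M,w)\models\varphi$ implies $(M^\varphi,w)\models\psi$; $[G,\chi]\varphi$ holds iff $\chi$ holds and $[\psi_G\wedge\chi]\varphi$ holds for all $\psi_G$; $[\langle G\rangle]\varphi$ holds iff for every $\psi_G$ there is $\chi_{A\setminus G}$ with $\psi_G\to\langle\psi_G\wedge\chi_{A\setminus G}\rangle\varphi$ holding. Valid means true at every pointed model. Necessity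 forms: $\eta ::= \sharp \mid \varphi\to\eta(\sharp)\mid K_a\eta(\sharp)\mid[\varphi]\eta(\sharp)$, $\eta(\varphi)$ replaces the unique $\sharp$ by $\varphi$. $\mathbf{CoRGAL}$ is the smallest set containing all instances of (A0) propositional tautologies; (A1) $K_a(\varphi\to\psi)\to(K_a\varphi\to K_a\psi)$; (A2) $K_a\varphi\to\varphi$; (A3) $K_a\varphi\to K_aK_a\varphi$; (A4) $\neg K_a\varphi\to K_a\neg K_a\varphi$; (A5) $[\varphi]p\leftrightarrow(\varphi\to p)$; (A6) $[\varphi]\neg\psi\leftrightarrow(\varphi\to\neg[\varphi]\psi)$; (A7) $[\varphi](\psi\wedge\chi)\leftrightarrow([\varphi]\psi\wedge[\varphi]\chi)$; (A8) $[\varphi]K_a\psi\leftrightarrow(\varphi\to K_a[\varphi]\psi)$; (A9) $[\varphi][\psi]\chi\leftrightarrow[\varphi\wedge[\varphi]\psi]\chi$; (A10) $[G,\chi]\varphi\to\chi\wedge[\psi_G\wedge\chi]\varphi$; (A11) $[\langle G\rangle]\varphi\to\langle A\setminus G,\psi_G\rangle\varphi$; closed under (R0) modus ponens; (R1) $\varphi/K_a\varphi$; (R2) $\varphi/[\psi]\varphi$; (R3) $\varphi/[G,\chi]\varphi$; (R4) $\varphi/[\langle G\rangle]\varphi$; (R5) from $\eta(\chi\wedge[\psi_G\wedge\chi]\varphi)$ for all $\psi_G$ infer $\eta([G,\chi]\varphi)$; (R6) from $\eta(\langle A\setminus G,\psi_G\rangle\varphi)$ for all $\psi_G$ infer $\eta([\langle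 G\rangle]\varphi)$. *)

theory Defs
  imports Main "HOL-Library.Countable"
begin

datatype ('a, 'p) fm =
    Atom 'p
  | Neg "('a, 'p) fm"
  | Conj "('a, 'p) fm" "('a, 'p) fm"
  | K 'a "('a, 'p) fm"
  | Ann "('a, 'p) fm" "('a, 'p) fm"          (* [phi]psi *)
  | GAnn "'a set" "('a, 'p) fm" "('a, 'p) fm" (* [G,chi]phi *)
  | CoAnn "'a set" "('a, 'p) fm"              (* [<G>]phi *)

definition Imp :: "('a, 'p) fm \<Rightarrow> ('a, 'p) fm \<Rightarrow> ('a, 'p) fm" where
  "Imp \<phi> \<psi> = Neg (Conj \<phi> (Neg \<psi>))"

definition Iff :: "('a, 'p) fm \<Rightarrow> ('a, 'p) fm \<Rightarrow> ('a, 'p) fm" where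
  "Iff \<phi> \<psi> = Conj (Imp \<phi> \<psi>) (Imp \<psi> \<phi>)"

definition Top :: "('a, 'p) fm" where
  "Top = Neg (Conj (Atom undefined) (Neg (Atom undefined)))"

definition DAnn :: "('a, 'p) fm \<Rightarrow> ('a, 'p) fm \<Rightarrow> ('a, 'p) fm" where
  "DAnn \<psi> \<phi> = Neg (Ann \<psi> (Neg \<phi>))"

definition DGAnn :: "'a set \<Rightarrow> ('a, 'p) fm \<Rightarrow> ('a, 'p) fm \<Rightarrow> ('a, 'p) fm" where
  "DGAnn G \<psi> \<phi> = Neg (GAnn G \<psi> (Neg \<phi>))"

fun conjs :: "('a, 'p) fm list \<Rightarrow> ('a, 'p) fm" where
  "conjs [] = Top"
| "conjs [x] = x"
| "conjs (x # xs) = Conj x (conjs xs)"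

fun is_EL :: "('a, 'p) fm \<Rightarrow> bool" where
  "is_EL (Atom p) = True"
| "is_EL (Neg \<phi>) = is_EL \<phi>"
| "is_EL (Conj \<phi> \<psi>) = (is_EL \<phi> \<and> is_EL \<psi>)"
| "is_EL (K a \<phi>) = is_EL \<phi>"
| "is_EL _ = False"

definition ELG :: "('a::linorder) set \<Rightarrow> ('a, 'p) fm set" where
  "ELG G = {conjs (map (\<lambda>i. K i (f i)) (sorted_list_of_set G)) | f. \<forall>i\<in>G. is_EL (f i)}"

record ('a, 'p, 'w) model =
  W :: "'w set"
  R :: "'a \<Rightarrow> ('w \<times> 'w) set"
  V :: "'p \<Rightarrow> 'w set"

definition is_model :: "('a, 'p, 'w) model \<Rightarrow> bool" where
  "is_model M \<longleftrightarrow> W M \<noteq> {} \<and> (\<forall>a. equiv (W M) (R M a))"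

definition restrict :: "('a, 'p, 'w) model \<Rightarrow> 'w set \<Rightarrow> ('a, 'p, 'w) model" where
  "restrict M S = \<lparr>W = W M \<inter> S, R = (\<lambda>a. R M a \<inter> (S \<times> S)), V = (\<lambda>p. V M p \<inter> S)\<rparr>"

text \<open>Semantics of the epistemic fragment (only used on L_EL formulas).\<close>
primrec sat_el :: "('a, 'p, 'w) model \<Rightarrow> 'w \<Rightarrow> ('a, 'p) fm \<Rightarrow> bool" where
  "sat_el M w (Atom p) = (w \<in> V M p)"
| "sat_el M w (Neg \<phi>) = (\<not> sat_el M w \<phi>)"
| "sat_el M w (Conj \<phi> \<psi>) = (sat_el M w \<phi> \<and> sat_el M w \<psi>)"
| "sat_el M w (K a \<phi>) = (\<forall>v. (w, v) \<in> R M a \<longrightarrow> sat_el M v \<phi>)"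
| "sat_el M w (Ann \<phi> \<psi>) = False"
| "sat_el M w (GAnn G \<phi> \<psi>) = False"
| "sat_el M w (CoAnn G \<phi>) = False"

primrec sat :: "('a::linorder, 'p, 'w) model \<Rightarrow> 'w \<Rightarrow> ('a, 'p) fm \<Rightarrow> bool" where
  "sat M w (Atom p) = (w \<in> V M p)"
| "sat M w (Neg \<phi>) = (\<not> sat M w \<phi>)"
| "sat M w (Conj \<phi> \<psi>) = (sat M w \<phi> \<and> sat M w \<psi>)"
| "sat M w (K a \<phi>) = (\<forall>v. (w, v) \<in> R M a \<longrightarrow> sat M v \<phi>)"
| "sat M w (Ann \<phi> \<psi>) =
     (sat M w \<phi> \<longrightarrow> sat (restrict M {v. sat M v \<phi>}) w \<psi>)"
| "sat M w (GAnn G \<chi> \<phi>) =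
     (sat M w \<chi> \<and>
      (\<forall>\<psi> \<in> ELG G.
         (sat_el M w \<psi> \<and> sat M w \<chi>) \<longrightarrow>
           sat (restrict M {v. sat_el M v \<psi> \<and> sat M v \<chi>}) w \<phi>))"
| "sat M w (CoAnn G \<phi>) =
     (\<forall>\<psi> \<in> ELG G. \<exists>\<chi> \<in> ELG (- G).
         sat_el M w \<psi> \<longrightarrow>
           (sat_el M w \<psi> \<and> sat_el M w \<chi> \<and>
            sat (restrict M {v. sat_el M v \<psi> \<and> sat_el M v \<chi>}) w \<phi>))"

text \<open>Validity: truth at every pointed model. Worlds are taken from the (large enough)
  type of sets of formulas.\<close>
definition valid :: "('a::linorder, 'p) fm \<Rightarrow> bool" where
  "valid \<phi> \<longleftrightarrow>
     (\<forall>(M :: ('a, 'p, ('a, 'p) fm set) model) w. is_model M \<and> w \<in> W M \<longrightarrow> sat M w \<phi>)"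

text \<open>Propositional tautology instances: true under every assignment of truth values
  to the maximal non-Boolean subformulas.\<close>
primrec peval :: "(('a, 'p) fm \<Rightarrow> bool) \<Rightarrow> ('a, 'p) fm \<Rightarrow> bool" where
  "peval v (Atom p) = v (Atom p)"
| "peval v (Neg \<phi>) = (\<not> peval v \<phi>)"
| "peval v (Conj \<phi> \<psi>) = (peval v \<phi> \<and> peval v \<psi>)"
| "peval v (K a \<phi>) = v (K a \<phi>)"
| "peval v (Ann \<phi> \<psi>) = v (Ann \<phi> \<psi>)"
| "peval v (GAnn G \<phi> \<psi>) = v (GAnn G \<phi> \<psi>)"
| "peval v (CoAnn G \<phi>) = v (CoAnn G \<phi>)"

definition tautology :: "('a, 'p) fm \<Rightarrow> bool" where
  "tautology \<phi> \<longleftrightarrow> (\<forall>v. peval v \<phi>)"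

datatype ('a, 'p) nform =
    Hole
  | NImp "('a, 'p) fm" "('a, 'p) nform"
  | NK 'a "('a, 'p) nform"
  | NAnn "('a, 'p) fm" "('a, 'p) nform"

primrec fill :: "('a, 'p) nform \<Rightarrow> ('a, 'p) fm \<Rightarrow> ('a, 'p) fm" where
  "fill Hole \<phi> = \<phi>"
| "fill (NImp \<psi> \<eta>) \<phi> = Imp \<psi> (fill \<eta> \<phi>)"
| "fill (NK a \<eta>) \<phi> = K a (fill \<eta> \<phi>)"
| "fill (NAnn \<psi> \<eta>) \<phi> = Ann \<psi> (fill \<eta> \<phi>)"

inductive CoRGAL :: "('a::linorder, 'p) fm \<Rightarrow> bool" where
  A0: "tautology \<phi> \<Longrightarrow> CoRGAL \<phi>"
| A1: "CoRGAL (Imp (K a (Imp \<phi> \<psi>)) (Imp (K a \<phi>) (K a \<psi>)))"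
| A2: "CoRGAL (Imp (K a \<phi>) \<phi>)"
| A3: "CoRGAL (Imp (K a \<phi>) (K a (K a \<phi>)))"
| A4: "CoRGAL (Imp (Neg (K a \<phi>)) (K a (Neg (K a \<phi>))))"
| A5: "CoRGAL (Iff (Ann \<phi> (Atom p)) (Imp \<phi> (Atom p)))"
| A6: "CoRGAL (Iff (Ann \<phi> (Neg \<psi>)) (Imp \<phi> (Neg (Ann \<phi> \<psi>))))"
| A7: "CoRGAL (Iff (Ann \<phi> (Conj \<psi> \<chi>)) (Conj (Ann \<phi> \<psi>) (Ann \<phi> \<chi>)))"
| A8: "CoRGAL (Iff (Ann \<phi> (K a \<psi>)) (Imp \<phi> (K a (Ann \<phi> \<psi>))))"
| A9: "CoRGAL (Iff (Ann \<phi> (Ann \<psi> \<chi>)) (Ann (Conj \<phi> (Ann \<phi> \<psi>)) \<chi>))"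
| A10: "\<psi> \<in> ELG G \<Longrightarrow> CoRGAL (Imp (GAnn G \<chi> \<phi>) (Conj \<chi> (Ann (Conj \<psi> \<chi>) \<phi>)))"
| A11: "\<psi> \<in> ELG G \<Longrightarrow> CoRGAL (Imp (CoAnn G \<phi>) (DGAnn (- G) \<psi> \<phi>))"
| R0: "CoRGAL \<phi> \<Longrightarrow> CoRGAL (Imp \<phi> \<psi>) \<Longrightarrow> CoRGAL \<psi>"
| R1: "CoRGAL \<phi> \<Longrightarrow> CoRGAL (K a \<phi>)"
| R2: "CoRGAL \<phi> \<Longrightarrow> CoRGAL (Ann \<psi> \<phi>)"
| R3: "CoRGAL \<phi> \<Longrightarrow> CoRGAL (GAnn G \<chi> \<phi>)"
| R4: "CoRGAL \<phi> \<Longrightarrow> CoRGAL (CoAnn G \<phi>)"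
| R5: "(\<forall>\<psi> \<in> ELG G. CoRGAL (fill \<eta> (Conj \<chi> (Ann (Conj \<psi> \<chi>) \<phi>))))
        \<Longrightarrow> CoRGAL (fill \<eta> (GAnn G \<chi> \<phi>))"
| R6: "(\<forall>\<psi> \<in> ELG G. CoRGAL (fill \<eta> (DGAnn (- G) \<psi> \<phi>)))
        \<Longrightarrow> CoRGAL (fill \<eta> (CoAnn G \<phi>))"

end

theory Submission
  imports Defs "HOL-Library.Countable"
begin
datatype ('a, 'p) cfm = CAtom 'p | CNeg "('a, 'p) cfm" | CConj "('a, 'p) cfm" "('a, 'p) cfm"
  | CK 'a "('a, 'p) cfm" | CAnn "('a, 'p) cfm" "('a, 'p) cfm"
  | CGAnn "'a list" "('a, 'p) cfm" "('a, 'p) cfm" | CCoAnn "'a list" "('a, 'p) cfm"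
datatype ('a, 'p) cnf = CHole | CNImp "('a, 'p) cfm" "('a, 'p) cnf" | CNK 'a "('a, 'p) cnf"
  | CNAnn "('a, 'p) cfm" "('a, 'p) cnf"
instance cfm :: (countable, countable) countable by countable_datatype
instance cnf :: (countable, countable) countable by countable_datatype

primrec enc :: "('a::{finite,linorder}, 'p) fm \<Rightarrow> ('a, 'p) cfm" where
  "enc (Atom p) = CAtom p"
| "enc (Neg a) = CNeg (enc a)"
| "enc (Conj a b) = CConj (enc a) (enc b)"
| "enc (K i a) = CK i (enc a)"
| "enc (Ann a b) = CAnn (enc a) (enc b)"
| "enc (GAnn G a b) = CGAnn (sorted_list_of_set G) (enc a) (enc b)"
| "enc (CoAnn G a) = CCoAnn (sorted_list_of_set G) (enc a)"

lemma inj_enc: "inj enc"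
proof -
  have "\<And>y. enc x = enc y \<Longrightarrow> x = y" for x :: "('a::{finite,linorder}, 'p) fm"
  proof (induction x)
    case (GAnn G a b) then show ?case
      by (cases y) (auto dest: arg_cong[where f=set])
  next
    case (CoAnn G a) then show ?case
      by (cases y) (auto dest: arg_cong[where f=set])
  qed (case_tac y; auto)+
  then show ?thesis by (auto simp: inj_def)
qed

primrec encn :: "('a::{finite,linorder}, 'p) nform \<Rightarrow> ('a, 'p) cnf" where
  "encn Hole = CHole"
| "encn (NImp a e) = CNImp (enc a) (encn e)"
| "encn (NK i e) = CNK i (encn e)"
| "encn (NAnn a e) = CNAnn (enc a) (encn e)"

lemma inj_encn: "inj encn"
proof -
  have "\<And>y. encn x = encn y \<Longrightarrow> x = y" for x :: "('a::{finite,linorder}, 'p) nform"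
    by (induction x) (case_tac y; auto dest: injD[OF inj_enc])+
  then show ?thesis by (auto simp: inj_def)
qed

instance fm :: ("{finite,linorder}", countable) countable
  by intro_classes (rule exI[of _ "to_nat \<circ> enc"], rule inj_compose, simp, rule inj_enc)
instance nform :: ("{finite,linorder}", countable) countable
  by intro_classes (rule exI[of _ "to_nat \<circ> encn"], rule inj_compose, simp, rule inj_encn)

definition Bot :: "('a, 'p) fm" where "Bot = Neg Top"

lemma peval_Top[simp]: "peval v Top" by (simp add: Top_def)
lemma peval_Bot[simp]: "\<not> peval v Bot" by (simp add: Bot_def)
lemma peval_Imp[simp]: "peval v (Imp a b) = (peval v a \<longrightarrow> peval v b)" by (simp add: Imp_def)
lemma peval_Iff[simp]: "peval v (Iff a b) = (peval v a \<longleftrightarrow> peval v b)" by (auto simp add: Iff_def)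

lemma cr_taut1: "tautology (Imp a b) \<Longrightarrow> CoRGAL a \<Longrightarrow> CoRGAL b"
  using A0 R0 by blast
lemma cr_taut2: "tautology (Imp a (Imp b c)) \<Longrightarrow> CoRGAL a \<Longrightarrow> CoRGAL b \<Longrightarrow> CoRGAL c"
  using A0 R0 by blast
lemma cr_taut3: "tautology (Imp a (Imp b (Imp c d))) \<Longrightarrow> CoRGAL a \<Longrightarrow> CoRGAL b \<Longrightarrow> CoRGAL c \<Longrightarrow> CoRGAL d"
  using A0 R0 by blast
lemma cr_taut4: "tautology (Imp a (Imp b (Imp c (Imp d e)))) \<Longrightarrow> CoRGAL a \<Longrightarrow> CoRGAL b \<Longrightarrow> CoRGAL c \<Longrightarrow> CoRGAL d \<Longrightarrow> CoRGAL e"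
  using A0 R0 by blast

definition isth :: "('a::linorder, 'p) fm set \<Rightarrow> bool" where
  "isth T \<longleftrightarrow> (\<forall>\<phi>. CoRGAL \<phi> \<longrightarrow> \<phi> \<in> T) \<and> (\<forall>\<phi> \<psi>. \<phi> \<in> T \<longrightarrow> Imp \<phi> \<psi> \<in> T \<longrightarrow> \<psi> \<in> T)
   \<and> (\<forall>G \<eta> \<chi> \<phi>. (\<forall>\<psi>\<in>ELG G. fill \<eta> (Conj \<chi> (Ann (Conj \<psi> \<chi>) \<phi>)) \<in> T) \<longrightarrow> fill \<eta> (GAnn G \<chi> \<phi>) \<in> T)
   \<and> (\<forall>G \<eta> \<phi>. (\<forall>\<psi>\<in>ELG G. fill \<eta> (DGAnn (- G) \<psi> \<phi>) \<in> T) \<longrightarrow> fill \<eta> (CoAnn G \<phi>) \<in> T)"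

definition consistent :: "('a, 'p) fm set \<Rightarrow> bool" where "consistent T \<longleftrightarrow> Bot \<notin> T"

definition mcs :: "('a::linorder, 'p) fm set \<Rightarrow> bool" where
  "mcs \<Gamma> \<longleftrightarrow> isth \<Gamma> \<and> consistent \<Gamma> \<and> (\<forall>\<phi>. \<phi> \<in> \<Gamma> \<or> Neg \<phi> \<in> \<Gamma>)"

definition ext :: "('a, 'p) fm set \<Rightarrow> ('a, 'p) fm \<Rightarrow> ('a, 'p) fm set" where
  "ext T \<phi> = {\<psi>. Imp \<phi> \<psi> \<in> T}"

lemma th_thm: "isth T \<Longrightarrow> CoRGAL \<phi> \<Longrightarrow> \<phi> \<in> T" unfolding isth_def by blast
lemma th_mp: "isth T \<Longrightarrow> \<phi> \<in> T \<Longrightarrow> Imp \<phi> \<psi> \<in> T \<Longrightarrow> \<psi> \<in> T" unfolding isth_def by blast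
lemma th_r5: "isth T \<Longrightarrow> (\<forall>\<psi>\<in>ELG G. fill \<eta> (Conj \<chi> (Ann (Conj \<psi> \<chi>) \<phi>)) \<in> T) \<Longrightarrow> fill \<eta> (GAnn G \<chi> \<phi>) \<in> T"
  unfolding isth_def by blast
lemma th_r6: "isth T \<Longrightarrow> (\<forall>\<psi>\<in>ELG G. fill \<eta> (DGAnn (- G) \<psi> \<phi>) \<in> T) \<Longrightarrow> fill \<eta> (CoAnn G \<phi>) \<in> T"
  unfolding isth_def by blast
lemma th_taut1: "isth T \<Longrightarrow> tautology (Imp a b) \<Longrightarrow> a \<in> T \<Longrightarrow> b \<in> T"
  using th_mp[of T a b] th_thm[of T "Imp a b"] A0[of "Imp a b"] by blast
lemma th_taut2: "isth T \<Longrightarrow> tautology (Imp a (Imp b c)) \<Longrightarrow> a \<in> T \<Longrightarrow> b \<in> T \<Longrightarrow> c \<in> T"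
  using th_mp[of T a "Imp b c"] th_mp[of T b c] th_thm[of T "Imp a (Imp b c)"] A0[of "Imp a (Imp b c)"] by blast
lemma th_cr1: "isth T \<Longrightarrow> CoRGAL (Imp a b) \<Longrightarrow> a \<in> T \<Longrightarrow> b \<in> T"
  using th_thm[of T "Imp a b"] th_mp[of T a b] by blast

lemma ext_theory: assumes T: "isth T" shows "isth (ext T \<phi>)"
proof -
  have 1: "Imp \<phi> \<psi> \<in> T" if "CoRGAL \<psi>" for \<psi>
    by (rule th_thm[OF T], rule cr_taut1[OF _ that]) (simp add: tautology_def)
  have 2: "Imp \<phi> b \<in> T" if "Imp \<phi> a \<in> T" "Imp \<phi> (Imp a b) \<in> T" for a b
    by (rule th_taut2[OF T _ that]) (simp add: tautology_def)
  have 3: "Imp \<phi> (fill \<eta> (GAnn G \<chi> \<psi>)) \<in> T"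
    if "\<forall>\<psi>'\<in>ELG G. Imp \<phi> (fill \<eta> (Conj \<chi> (Ann (Conj \<psi>' \<chi>) \<psi>))) \<in> T" for G \<eta> \<chi> \<psi>
    using th_r5[OF T, of G "NImp \<phi> \<eta>" \<chi> \<psi>] that by simp
  have 4: "Imp \<phi> (fill \<eta> (CoAnn G \<psi>)) \<in> T"
    if "\<forall>\<psi>'\<in>ELG G. Imp \<phi> (fill \<eta> (DGAnn (- G) \<psi>' \<psi>)) \<in> T" for G \<eta> \<psi>
    using th_r6[OF T, of G "NImp \<phi> \<eta>" \<psi>] that by simp
  show ?thesis unfolding isth_def ext_def using 1 2 3 4 by blast
qed

lemma ext_sub: assumes "isth T" shows "T \<subseteq> ext T \<phi>"
proof
  fix x assume "x \<in> T"
  then have "Imp \<phi> x \<in> T" by (rule th_taut1[OF assms, of x "Imp \<phi> x", rotated]) (simp add: tautology_def)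
  then show "x \<in> ext T \<phi>" by (simp add: ext_def)
qed
lemma ext_mem: "isth T \<Longrightarrow> \<phi> \<in> ext T \<phi>"
  unfolding ext_def mem_Collect_eq by (rule th_thm, assumption, rule A0, simp add: tautology_def)
lemma ext_incons: assumes "isth T" "\<not> consistent (ext T \<phi>)" shows "Neg \<phi> \<in> T"
proof -
  have "Imp \<phi> Bot \<in> T" using assms(2) by (simp add: ext_def consistent_def)
  then show ?thesis by (rule th_taut1[OF assms(1), of "Imp \<phi> Bot" "Neg \<phi>", rotated]) (simp add: tautology_def)
qed
lemma th_nn: "isth T \<Longrightarrow> Neg (Neg a) \<in> T \<Longrightarrow> a \<in> T"
  by (rule th_taut1[of T "Neg (Neg a)"]) (auto simp: tautology_def)
lemma incons_pair: assumes "isth T" "\<phi> \<in> T" "Neg \<phi> \<in> T" shows "\<not> consistent T"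
proof -
  have "Bot \<in> T" using assms(2,3) by (rule th_taut2[OF assms(1), of \<phi> "Neg \<phi>" Bot, rotated]) (simp add: tautology_def)
  then show ?thesis by (simp add: consistent_def)
qed

lemma gsat:
  assumes T: "isth T" "consistent T" and nc: "\<not> consistent (ext T (fill \<eta> (GAnn G \<chi> \<phi>)))"
  shows "\<exists>\<psi>. \<psi> \<in> ELG G \<and> consistent (ext T (Neg (fill \<eta> (Conj \<chi> (Ann (Conj \<psi> \<chi>) \<phi>)))))"
proof (rule ccontr)
  assume "\<not> ?thesis"
  then have "\<forall>\<psi>\<in>ELG G. Neg (Neg (fill \<eta> (Conj \<chi> (Ann (Conj \<psi> \<chi>) \<phi>)))) \<in> T"
    using ext_incons[OF T(1)] by blast
  then have "\<forall>\<psi>\<in>ELG G. fill \<eta> (Conj \<chi> (Ann (Conj \<psi> \<chi>) \<phi>)) \<in> T"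
    using th_nn[OF T(1)] by blast
  then have "fill \<eta> (GAnn G \<chi> \<phi>) \<in> T" by (rule th_r5[OF T(1)])
  moreover have "Neg (fill \<eta> (GAnn G \<chi> \<phi>)) \<in> T" using ext_incons[OF T(1) nc] .
  ultimately show False using incons_pair T by blast
qed

lemma csat:
  assumes T: "isth T" "consistent T" and nc: "\<not> consistent (ext T (fill \<eta> (CoAnn G \<phi>)))"
  shows "\<exists>\<psi>. \<psi> \<in> ELG G \<and> consistent (ext T (Neg (fill \<eta> (DGAnn (- G) \<psi> \<phi>))))"
proof (rule ccontr)
  assume "\<not> ?thesis"
  then have "\<forall>\<psi>\<in>ELG G. Neg (Neg (fill \<eta> (DGAnn (- G) \<psi> \<phi>))) \<in> T"
    using ext_incons[OF T(1)] by blast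
  then have "\<forall>\<psi>\<in>ELG G. fill \<eta> (DGAnn (- G) \<psi> \<phi>) \<in> T"
    using th_nn[OF T(1)] by blast
  then have "fill \<eta> (CoAnn G \<phi>) \<in> T" by (rule th_r6[OF T(1)])
  moreover have "Neg (fill \<eta> (CoAnn G \<phi>)) \<in> T" using ext_incons[OF T(1) nc] .
  ultimately show False using incons_pair T by blast
qed

definition gwit where
  "gwit T \<eta> G \<chi> \<phi> = (SOME \<psi>. \<psi> \<in> ELG G \<and> consistent (ext T (Neg (fill \<eta> (Conj \<chi> (Ann (Conj \<psi> \<chi>) \<phi>))))))"
definition cwit where
  "cwit T \<eta> G \<phi> = (SOME \<psi>. \<psi> \<in> ELG G \<and> consistent (ext T (Neg (fill \<eta> (DGAnn (- G) \<psi> \<phi>)))))"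

fun stepi :: "('a::{finite,linorder}, 'p) fm set \<Rightarrow> ('a, 'p) fm + (('a, 'p) nform \<times> 'a set \<times> ('a, 'p) fm \<times> ('a, 'p) fm) + (('a, 'p) nform \<times> 'a set \<times> ('a, 'p) fm) \<Rightarrow> ('a, 'p) fm set" where
  "stepi T (Inl \<phi>) = (if consistent (ext T \<phi>) then ext T \<phi> else ext T (Neg \<phi>))"
| "stepi T (Inr (Inl (\<eta>, G, \<chi>, \<phi>))) = (if consistent (ext T (fill \<eta> (GAnn G \<chi> \<phi>))) then ext T (fill \<eta> (GAnn G \<chi> \<phi>))
      else ext T (Neg (fill \<eta> (Conj \<chi> (Ann (Conj (gwit T \<eta> G \<chi> \<phi>) \<chi>) \<phi>)))))"
| "stepi T (Inr (Inr (\<eta>, G, \<phi>))) = (if consistent (ext T (fill \<eta> (CoAnn G \<phi>))) then ext T (fill \<eta> (CoAnn G \<phi>))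
      else ext T (Neg (fill \<eta> (DGAnn (- G) (cwit T \<eta> G \<phi>) \<phi>))))"

lemma gwit: "isth T \<Longrightarrow> consistent T \<Longrightarrow> \<not> consistent (ext T (fill \<eta> (GAnn G \<chi> \<phi>))) \<Longrightarrow>
   gwit T \<eta> G \<chi> \<phi> \<in> ELG G \<and> consistent (ext T (Neg (fill \<eta> (Conj \<chi> (Ann (Conj (gwit T \<eta> G \<chi> \<phi>) \<chi>) \<phi>)))))"
  unfolding gwit_def by (rule someI_ex, rule gsat)
lemma cwit: "isth T \<Longrightarrow> consistent T \<Longrightarrow> \<not> consistent (ext T (fill \<eta> (CoAnn G \<phi>))) \<Longrightarrow>
   cwit T \<eta> G \<phi> \<in> ELG G \<and> consistent (ext T (Neg (fill \<eta> (DGAnn (- G) (cwit T \<eta> G \<phi>) \<phi>))))"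
  unfolding cwit_def by (rule someI_ex, rule csat)

lemma stepi_1: assumes T: "isth T" "consistent T"
  shows "isth (stepi T (Inl \<phi>)) \<and> consistent (stepi T (Inl \<phi>)) \<and> T \<subseteq> stepi T (Inl \<phi>)"
proof (cases "consistent (ext T \<phi>)")
    case True
    then have e: "stepi T (Inl \<phi>) = ext T \<phi>" by simp
    show ?thesis unfolding e using True ext_theory[OF T(1)] ext_sub[OF T(1)] by blast
  next
    case False
    then have e: "stepi T (Inl \<phi>) = ext T (Neg \<phi>)" by simp
    have "Neg \<phi> \<in> T" using ext_incons[OF T(1) False] .
    moreover have "consistent (ext T (Neg \<phi>))"
    proof (rule ccontr)
      assume "\<not> consistent (ext T (Neg \<phi>))"
      then have "Neg (Neg \<phi>) \<in> T" using ext_incons[OF T(1)] by blast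
      then show False using incons_pair[OF T(1) \<open>Neg \<phi> \<in> T\<close>] T(2) by blast
    qed
    ultimately show ?thesis unfolding e using ext_theory[OF T(1)] ext_sub[OF T(1)] by blast
qed

lemma stepi_2: assumes T: "isth T" "consistent T"
  shows "isth (stepi T (Inr (Inl (\<eta>, G, \<chi>, \<phi>)))) \<and> consistent (stepi T (Inr (Inl (\<eta>, G, \<chi>, \<phi>)))) \<and> T \<subseteq> stepi T (Inr (Inl (\<eta>, G, \<chi>, \<phi>)))"
proof (cases "consistent (ext T (fill \<eta> (GAnn G \<chi> \<phi>)))")
    case True
    then have e: "stepi T (Inr (Inl (\<eta>, G, \<chi>, \<phi>))) = ext T (fill \<eta> (GAnn G \<chi> \<phi>))" by simp
    show ?thesis unfolding e using True ext_theory[OF T(1)] ext_sub[OF T(1)] by blast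
  next
    case False
    then have e: "stepi T (Inr (Inl (\<eta>, G, \<chi>, \<phi>))) = ext T (Neg (fill \<eta> (Conj \<chi> (Ann (Conj (gwit T \<eta> G \<chi> \<phi>) \<chi>) \<phi>))))" by simp
    show ?thesis unfolding e using gwit[OF T False] ext_theory[OF T(1)] ext_sub[OF T(1)] by blast
qed

lemma stepi_3: assumes T: "isth T" "consistent T"
  shows "isth (stepi T (Inr (Inr (\<eta>, G, \<phi>)))) \<and> consistent (stepi T (Inr (Inr (\<eta>, G, \<phi>)))) \<and> T \<subseteq> stepi T (Inr (Inr (\<eta>, G, \<phi>)))"
proof (cases "consistent (ext T (fill \<eta> (CoAnn G \<phi>)))")
    case True
    then have e: "stepi T (Inr (Inr (\<eta>, G, \<phi>))) = ext T (fill \<eta> (CoAnn G \<phi>))" by simp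
    show ?thesis unfolding e using True ext_theory[OF T(1)] ext_sub[OF T(1)] by blast
  next
    case False
    then have e: "stepi T (Inr (Inr (\<eta>, G, \<phi>))) = ext T (Neg (fill \<eta> (DGAnn (- G) (cwit T \<eta> G \<phi>) \<phi>)))" by simp
    show ?thesis unfolding e using cwit[OF T False] ext_theory[OF T(1)] ext_sub[OF T(1)] by blast
qed

lemma stepi_ok: assumes T: "isth T" "consistent T"
  shows "isth (stepi T x) \<and> consistent (stepi T x) \<and> T \<subseteq> stepi T x"
proof (cases x)
  case (Inl \<phi>) then show ?thesis using stepi_1[OF T] by simp
next
  case (Inr y)
  show ?thesis
  proof (cases y)
    case (Inl z)
    obtain \<eta> G \<chi> \<phi> where "z = (\<eta>, G, \<chi>, \<phi>)" by (cases z) auto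
    then show ?thesis using stepi_2[OF T] Inr Inl by simp
  next
    case (Inr z)
    obtain \<eta> G \<phi> where "z = (\<eta>, G, \<phi>)" by (cases z) auto
    then show ?thesis using stepi_3[OF T] \<open>x = Inr y\<close> Inr by simp
  qed
qed

primrec chain :: "('a::{finite,linorder}, 'p::countable) fm set \<Rightarrow> nat \<Rightarrow> ('a, 'p) fm set" where
  "chain T 0 = T"
| "chain T (Suc n) = stepi (chain T n) (from_nat n)"

lemma chain_ok: assumes "isth T" "consistent T" shows "isth (chain T n) \<and> consistent (chain T n)"
proof (induction n)
  case 0 then show ?case using assms by simp
next
  case (Suc n)
  then show ?case using stepi_ok[of "chain T n" "from_nat n"] by simp
qed

lemma chain_mono: assumes "isth T" "consistent T" "m \<le> n" shows "chain T m \<subseteq> chain T n"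
proof -
  have "chain T k \<subseteq> chain T (Suc k)" for k using chain_ok[OF assms(1,2), of k] stepi_ok[of "chain T k" "from_nat k"] by simp
  then show ?thesis using lift_Suc_mono_le[of "chain T"] assms(3) by blast
qed

lemma chain_two: assumes "isth T" "consistent T" "a \<in> chain T m" "b \<in> chain T k"
  shows "a \<in> chain T (max m k) \<and> b \<in> chain T (max m k)"
  using chain_mono[OF assms(1,2)] assms(3,4) by (meson max.cobounded1 max.cobounded2 subsetD)

lemma chain_sub_L: "x \<in> chain T n \<Longrightarrow> x \<in> (\<Union>n. chain T n)" by blast

lemma lindenbaum:
  fixes T :: "('a::{finite,linorder}, 'p::countable) fm set"
  assumes T: "isth T" "consistent T"
  shows "\<exists>\<Gamma>. mcs \<Gamma> \<and> T \<subseteq> \<Gamma>"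
proof -
  define L where "L = (\<Union>n. chain T n)"
  have ok: "isth (chain T n) \<and> consistent (chain T n)" for n using chain_ok[OF T] .
  have inL: "x \<in> chain T n \<Longrightarrow> x \<in> L" for x n unfolding L_def by blast
  have cons: "consistent L"
  proof -
    have "Bot \<notin> chain T n" for n using ok[of n] by (simp add: consistent_def)
    then show ?thesis unfolding L_def consistent_def by blast
  qed
  have notboth: False if ha: "a \<in> L" "Neg a \<in> L" for a
  proof -
    obtain m k where m: "a \<in> chain T m" and k: "Neg a \<in> chain T k" using ha L_def by blast
    have "a \<in> chain T (max m k) \<and> Neg a \<in> chain T (max m k)" by (rule chain_two[OF T m k])
    then have "\<not> consistent (chain T (max m k))" using incons_pair ok by blast
    then show False using ok by blast
  qed
  have th: "isth L"
    unfolding isth_def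
  proof (intro conjI allI impI)
    fix \<phi> :: "('a, 'p) fm" assume "CoRGAL \<phi>" then show "\<phi> \<in> L"
      using th_thm[OF T(1)] inL[of _ 0] by simp
  next
    fix \<phi> \<psi> :: "('a, 'p) fm" assume "\<phi> \<in> L" "Imp \<phi> \<psi> \<in> L"
    then obtain m k where m: "\<phi> \<in> chain T m" and k: "Imp \<phi> \<psi> \<in> chain T k" using L_def by blast
    have "\<phi> \<in> chain T (max m k) \<and> Imp \<phi> \<psi> \<in> chain T (max m k)" by (rule chain_two[OF T m k])
    then have "\<psi> \<in> chain T (max m k)" using th_mp ok by blast
    then show "\<psi> \<in> L" by (rule inL)
  next
    fix G \<eta> \<chi> \<phi>
    assume all: "\<forall>\<psi>\<in>ELG G. fill \<eta> (Conj \<chi> (Ann (Conj \<psi> \<chi>) \<phi>)) \<in> L"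
    define n where "n = to_nat (Inr (Inl (\<eta>, G, \<chi>, \<phi>)) :: ('a, 'p) fm + (('a, 'p) nform \<times> 'a set \<times> ('a, 'p) fm \<times> ('a, 'p) fm) + (('a, 'p) nform \<times> 'a set \<times> ('a, 'p) fm))"
    have cs: "chain T (Suc n) = stepi (chain T n) (Inr (Inl (\<eta>, G, \<chi>, \<phi>)))" by (simp only: n_def chain.simps from_nat_to_nat)
    show "fill \<eta> (GAnn G \<chi> \<phi>) \<in> L"
    proof (cases "consistent (ext (chain T n) (fill \<eta> (GAnn G \<chi> \<phi>)))")
      case True
      then have "chain T (Suc n) = ext (chain T n) (fill \<eta> (GAnn G \<chi> \<phi>))" using cs by simp
      then have "fill \<eta> (GAnn G \<chi> \<phi>) \<in> chain T (Suc n)" using ext_mem ok by metis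
      then show ?thesis by (rule inL)
    next
      case False
      let ?w = "gwit (chain T n) \<eta> G \<chi> \<phi>"
      have w: "?w \<in> ELG G" using gwit ok False by blast
      have "chain T (Suc n) = ext (chain T n) (Neg (fill \<eta> (Conj \<chi> (Ann (Conj ?w \<chi>) \<phi>))))" using cs False by simp
      then have "Neg (fill \<eta> (Conj \<chi> (Ann (Conj ?w \<chi>) \<phi>))) \<in> chain T (Suc n)" using ext_mem ok by metis
      then have "Neg (fill \<eta> (Conj \<chi> (Ann (Conj ?w \<chi>) \<phi>))) \<in> L" by (rule inL)
      moreover have "fill \<eta> (Conj \<chi> (Ann (Conj ?w \<chi>) \<phi>)) \<in> L" using all w by blast
      ultimately show ?thesis using notboth by blast
    qed
  next
    fix G \<eta> \<phi>
    assume all: "\<forall>\<psi>\<in>ELG G. fill \<eta> (DGAnn (- G) \<psi> \<phi>) \<in> L"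
    define n where "n = to_nat (Inr (Inr (\<eta>, G, \<phi>)) :: ('a, 'p) fm + (('a, 'p) nform \<times> 'a set \<times> ('a, 'p) fm \<times> ('a, 'p) fm) + (('a, 'p) nform \<times> 'a set \<times> ('a, 'p) fm))"
    have cs: "chain T (Suc n) = stepi (chain T n) (Inr (Inr (\<eta>, G, \<phi>)))" by (simp only: n_def chain.simps from_nat_to_nat)
    show "fill \<eta> (CoAnn G \<phi>) \<in> L"
    proof (cases "consistent (ext (chain T n) (fill \<eta> (CoAnn G \<phi>)))")
      case True
      then have "chain T (Suc n) = ext (chain T n) (fill \<eta> (CoAnn G \<phi>))" using cs by simp
      then have "fill \<eta> (CoAnn G \<phi>) \<in> chain T (Suc n)" using ext_mem ok by metis
      then show ?thesis by (rule inL)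
    next
      case False
      let ?w = "cwit (chain T n) \<eta> G \<phi>"
      have w: "?w \<in> ELG G" using cwit ok False by blast
      have "chain T (Suc n) = ext (chain T n) (Neg (fill \<eta> (DGAnn (- G) ?w \<phi>)))" using cs False by simp
      then have "Neg (fill \<eta> (DGAnn (- G) ?w \<phi>)) \<in> chain T (Suc n)" using ext_mem ok by metis
      then have "Neg (fill \<eta> (DGAnn (- G) ?w \<phi>)) \<in> L" by (rule inL)
      moreover have "fill \<eta> (DGAnn (- G) ?w \<phi>) \<in> L" using all w by blast
      ultimately show ?thesis using notboth by blast
    qed
  qed
  have max: "\<phi> \<in> L \<or> Neg \<phi> \<in> L" for \<phi>
  proof -
    define n where "n = to_nat (Inl \<phi> :: ('a, 'p) fm + (('a, 'p) nform \<times> 'a set \<times> ('a, 'p) fm \<times> ('a, 'p) fm) + (('a, 'p) nform \<times> 'a set \<times> ('a, 'p) fm))"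
    have cs: "chain T (Suc n) = stepi (chain T n) (Inl \<phi>)" by (simp only: n_def chain.simps from_nat_to_nat)
    show ?thesis
    proof (cases "consistent (ext (chain T n) \<phi>)")
      case True
      then have "chain T (Suc n) = ext (chain T n) \<phi>" using cs by simp
      then have "\<phi> \<in> chain T (Suc n)" using ext_mem ok by metis
      then show ?thesis using inL by blast
    next
      case False
      then have "chain T (Suc n) = ext (chain T n) (Neg \<phi>)" using cs by simp
      then have "Neg \<phi> \<in> chain T (Suc n)" using ext_mem ok by metis
      then show ?thesis using inL by blast
    qed
  qed
  have "T \<subseteq> L" using inL[of _ 0] by auto
  then show ?thesis using th cons max mcs_def by blast
qed

section \<open>Maximal consistent sets\<close>

lemma mcs_thm: "mcs \<Gamma> \<Longrightarrow> CoRGAL \<phi> \<Longrightarrow> \<phi> \<in> \<Gamma>" by (simp add: mcs_def th_thm)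

lemma mcs_neg: assumes "mcs \<Gamma>" shows "Neg \<phi> \<in> \<Gamma> \<longleftrightarrow> \<phi> \<notin> \<Gamma>"
  using assms incons_pair unfolding mcs_def by blast

lemma mcs_taut1: "mcs \<Gamma> \<Longrightarrow> tautology (Imp a b) \<Longrightarrow> a \<in> \<Gamma> \<Longrightarrow> b \<in> \<Gamma>"
  unfolding mcs_def using th_taut1 by blast
lemma mcs_taut2: "mcs \<Gamma> \<Longrightarrow> tautology (Imp a (Imp b c)) \<Longrightarrow> a \<in> \<Gamma> \<Longrightarrow> b \<in> \<Gamma> \<Longrightarrow> c \<in> \<Gamma>"
  unfolding mcs_def using th_taut2 by blast

lemma mcs_conj: assumes "mcs \<Gamma>" shows "Conj a b \<in> \<Gamma> \<longleftrightarrow> a \<in> \<Gamma> \<and> b \<in> \<Gamma>"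
proof (intro iffI conjI)
  assume "Conj a b \<in> \<Gamma>"
  then show "a \<in> \<Gamma>" by (rule mcs_taut1[OF assms, of "Conj a b", rotated]) (simp add: tautology_def)
next
  assume "Conj a b \<in> \<Gamma>"
  then show "b \<in> \<Gamma>" by (rule mcs_taut1[OF assms, of "Conj a b", rotated]) (simp add: tautology_def)
next
  assume h: "a \<in> \<Gamma> \<and> b \<in> \<Gamma>"
  show "Conj a b \<in> \<Gamma>" by (rule mcs_taut2[OF assms _ conjunct1[OF h] conjunct2[OF h]]) (simp add: tautology_def)
qed

lemma mcs_imp: assumes "mcs \<Gamma>" shows "Imp a b \<in> \<Gamma> \<longleftrightarrow> (a \<in> \<Gamma> \<longrightarrow> b \<in> \<Gamma>)"
proof (intro iffI impI)
  assume "Imp a b \<in> \<Gamma>" "a \<in> \<Gamma>" then show "b \<in> \<Gamma>" using assms th_mp mcs_def by blast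
next
  assume h: "a \<in> \<Gamma> \<longrightarrow> b \<in> \<Gamma>"
  show "Imp a b \<in> \<Gamma>"
  proof (cases "a \<in> \<Gamma>")
    case True
    then have "b \<in> \<Gamma>" using h by blast
    then show ?thesis by (rule mcs_taut1[OF assms, of b, rotated]) (simp add: tautology_def)
  next
    case False
    then have "Neg a \<in> \<Gamma>" using mcs_neg[OF assms] by blast
    then show ?thesis by (rule mcs_taut1[OF assms, of "Neg a", rotated]) (simp add: tautology_def)
  qed
qed

lemma mcs_iff: assumes "mcs \<Gamma>" "CoRGAL (Iff a b)" shows "a \<in> \<Gamma> \<longleftrightarrow> b \<in> \<Gamma>"
proof -
  have i: "Iff a b \<in> \<Gamma>" using mcs_thm assms by blast
  show ?thesis
  proof
    assume h: "a \<in> \<Gamma>" show "b \<in> \<Gamma>"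
      by (rule mcs_taut2[OF assms(1) _ i h]) (simp add: tautology_def)
  next
    assume h: "b \<in> \<Gamma>" show "a \<in> \<Gamma>"
      by (rule mcs_taut2[OF assms(1) _ i h]) (simp add: tautology_def)
  qed
qed

lemma mcs_cr: "mcs \<Gamma> \<Longrightarrow> CoRGAL (Imp a b) \<Longrightarrow> a \<in> \<Gamma> \<Longrightarrow> b \<in> \<Gamma>"
  using mcs_imp mcs_thm by blast

section \<open>Announcements of false formulas\<close>

lemma L1:
  fixes \<theta> b :: "('a::linorder, 'p) fm"
  shows "CoRGAL (Imp (Neg \<theta>) (Ann \<theta> b))"
proof (induction b arbitrary: \<theta>)
  case (Atom p)
  show ?case by (rule cr_taut1[OF _ A5[of \<theta> p]]) (simp add: tautology_def)
next
  case (Neg b)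
  show ?case by (rule cr_taut1[OF _ A6[of \<theta> b]]) (simp add: tautology_def)
next
  case (Conj b1 b2)
  show ?case by (rule cr_taut3[OF _ A7[of \<theta> b1 b2] Conj.IH(1)[of \<theta>] Conj.IH(2)[of \<theta>]]) (simp add: tautology_def)
next
  case (K a b)
  show ?case by (rule cr_taut1[OF _ A8[of \<theta> a b]]) (simp add: tautology_def)
next
  case (Ann \<psi> \<chi>)
  show ?case by (rule cr_taut2[OF _ A9[of \<theta> \<psi> \<chi>] Ann.IH(2)[of "Conj \<theta> (Ann \<theta> \<psi>)"]]) (simp add: tautology_def)
next
  case (GAnn G \<chi> \<phi>)
  have "CoRGAL (fill (NImp (Neg \<theta>) (NAnn \<theta> Hole)) (GAnn G \<chi> \<phi>))"
  proof (rule R5, intro ballI)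
    fix \<psi> :: "('a, 'p) fm" assume "\<psi> \<in> ELG G"
    show "CoRGAL (fill (NImp (Neg \<theta>) (NAnn \<theta> Hole)) (Conj \<chi> (Ann (Conj \<psi> \<chi>) \<phi>)))"
      apply simp
      by (rule cr_taut4[OF _ A7[of \<theta> \<chi> "Ann (Conj \<psi> \<chi>) \<phi>"] GAnn.IH(1)[of \<theta>]
            A9[of \<theta> "Conj \<psi> \<chi>" \<phi>] GAnn.IH(2)[of "Conj \<theta> (Ann \<theta> (Conj \<psi> \<chi>))"]])
        (simp add: tautology_def)
  qed
  then show ?case by simp
next
  case (CoAnn G \<phi>)
  have "CoRGAL (fill (NImp (Neg \<theta>) (NAnn \<theta> Hole)) (CoAnn G \<phi>))"
  proof (rule R6, intro ballI)
    fix \<psi> :: "('a, 'p) fm" assume "\<psi> \<in> ELG G"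
    show "CoRGAL (fill (NImp (Neg \<theta>) (NAnn \<theta> Hole)) (DGAnn (- G) \<psi> \<phi>))"
      unfolding DGAnn_def
      apply simp
      by (rule cr_taut1[OF _ A6[of \<theta> "GAnn (- G) \<psi> (Neg \<phi>)"]]) (simp add: tautology_def)
  qed
  then show ?case by simp
qed

lemma mcs_ann_imp: assumes G: "mcs \<Gamma>" and t: "\<theta> \<in> \<Gamma>" and i: "Ann \<theta> (Imp A B) \<in> \<Gamma>" and a: "Ann \<theta> A \<in> \<Gamma>"
  shows "Ann \<theta> B \<in> \<Gamma>"
proof -
  have "Imp \<theta> (Neg (Ann \<theta> (Conj A (Neg B)))) \<in> \<Gamma>"
    using mcs_iff[OF G A6[of \<theta> "Conj A (Neg B)"]] i by (simp add: Imp_def)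
  then have "Ann \<theta> (Conj A (Neg B)) \<notin> \<Gamma>" using t mcs_imp[OF G] mcs_neg[OF G] by blast
  then have "Ann \<theta> (Neg B) \<notin> \<Gamma>" using mcs_iff[OF G A7[of \<theta> A "Neg B"]] mcs_conj[OF G] a by blast
  then have "Imp \<theta> (Neg (Ann \<theta> B)) \<notin> \<Gamma>" using mcs_iff[OF G A6[of \<theta> B]] by blast
  then show ?thesis using mcs_imp[OF G] mcs_neg[OF G] by blast
qed

lemma mcs_ann_cr: "mcs \<Gamma> \<Longrightarrow> \<theta> \<in> \<Gamma> \<Longrightarrow> CoRGAL (Imp A B) \<Longrightarrow> Ann \<theta> A \<in> \<Gamma> \<Longrightarrow> Ann \<theta> B \<in> \<Gamma>"
  using mcs_ann_imp mcs_thm R2 by blast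

lemma is_EL_conjs: "\<forall>x\<in>set xs. is_EL x \<Longrightarrow> is_EL (conjs xs)"
  by (induction xs rule: conjs.induct) (auto simp: Top_def)

lemma ELG_EL: fixes G :: "'a::{finite,linorder} set" shows "\<psi> \<in> ELG G \<Longrightarrow> is_EL \<psi>"
  unfolding ELG_def by (auto intro!: is_EL_conjs simp: set_sorted_list_of_set[of G])

lemma ELG_ne: "ELG G \<noteq> {}"
proof -
  have "conjs (map (\<lambda>i. K i (Atom undefined)) (sorted_list_of_set G)) \<in> ELG G"
    unfolding ELG_def by auto
  then show ?thesis by blast
qed

lemma sat_el_sat: "is_EL \<phi> \<Longrightarrow> sat M w \<phi> = sat_el M w \<phi>"
  by (induction \<phi> arbitrary: w) auto

lemma restrict_restrict: "restrict (restrict M A) B = restrict M (A \<inter> B)"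
  by (simp add: restrict_def Int_assoc Times_Int_Times)

lemma S_GAnn0:
  fixes M :: "('a::{finite,linorder}, 'p, 'w) model"
  shows "sat M w (GAnn G \<chi> \<phi>) \<longleftrightarrow> (\<forall>\<psi>\<in>ELG G. sat M w (Conj \<chi> (Ann (Conj \<psi> \<chi>) \<phi>)))"
proof -
  have e: "sat M v \<psi> = sat_el M v \<psi>" if "\<psi> \<in> ELG G" for \<psi> v
    by (rule sat_el_sat[OF ELG_EL[OF that]])
  have p: "sat M w (Conj \<chi> (Ann (Conj \<psi> \<chi>) \<phi>)) \<longleftrightarrow>
      sat M w \<chi> \<and> (sat_el M w \<psi> \<and> sat M w \<chi> \<longrightarrow> sat (restrict M {v. sat_el M v \<psi> \<and> sat M v \<chi>}) w \<phi>)"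
    if "\<psi> \<in> ELG G" for \<psi>
    by (simp add: e[OF that])
  obtain \<psi>0 :: "('a, 'p) fm" where p0: "\<psi>0 \<in> ELG G" using ELG_ne by blast
  show ?thesis
  proof
    assume L: "sat M w (GAnn G \<chi> \<phi>)"
    show "\<forall>\<psi>\<in>ELG G. sat M w (Conj \<chi> (Ann (Conj \<psi> \<chi>) \<phi>))"
    proof
      fix \<psi> :: "('a, 'p) fm" assume h: "\<psi> \<in> ELG G"
      have "sat M w \<chi>" using L by simp
      moreover have "sat_el M w \<psi> \<and> sat M w \<chi> \<longrightarrow> sat (restrict M {v. sat_el M v \<psi> \<and> sat M v \<chi>}) w \<phi>"
        using L h by simp
      ultimately show "sat M w (Conj \<chi> (Ann (Conj \<psi> \<chi>) \<phi>))" using p[OF h] by blast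
    qed
  next
    assume R: "\<forall>\<psi>\<in>ELG G. sat M w (Conj \<chi> (Ann (Conj \<psi> \<chi>) \<phi>))"
    have c: "sat M w \<chi>" using bspec[OF R p0] p[OF p0] by blast
    have "\<forall>\<psi>\<in>ELG G. sat_el M w \<psi> \<and> sat M w \<chi> \<longrightarrow> sat (restrict M {v. sat_el M v \<psi> \<and> sat M v \<chi>}) w \<phi>"
    proof
      fix \<psi> :: "('a, 'p) fm" assume h: "\<psi> \<in> ELG G"
      show "sat_el M w \<psi> \<and> sat M w \<chi> \<longrightarrow> sat (restrict M {v. sat_el M v \<psi> \<and> sat M v \<chi>}) w \<phi>"
        using R h p[OF h] by blast
    qed
    then show "sat M w (GAnn G \<chi> \<phi>)" using c by simp
  qed
qed

lemma S_CoAnn0: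
  fixes M :: "('a::{finite,linorder}, 'p, 'w) model"
  shows "sat M w (CoAnn G \<phi>) \<longleftrightarrow> (\<forall>\<psi>\<in>ELG G. sat M w (DGAnn (- G) \<psi> \<phi>))"
proof -
  have e: "sat M v \<psi> = sat_el M v \<psi>" if "\<psi> \<in> ELG G" for \<psi> v
    by (rule sat_el_sat[OF ELG_EL[OF that]])
  obtain \<chi>0 :: "('a, 'p) fm" where c0: "\<chi>0 \<in> ELG (- G)" using ELG_ne by blast
  have p: "sat M w (DGAnn (- G) \<psi> \<phi>) \<longleftrightarrow>
     (\<exists>\<chi> \<in> ELG (- G). sat_el M w \<psi> \<longrightarrow>
           (sat_el M w \<psi> \<and> sat_el M w \<chi> \<and>
            sat (restrict M {v. sat_el M v \<psi> \<and> sat_el M v \<chi>}) w \<phi>))"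
    if h: "\<psi> \<in> ELG G" for \<psi>
  proof -
    have s: "{v. sat_el M v \<chi> \<and> sat_el M v \<psi>} = {v. sat_el M v \<psi> \<and> sat_el M v \<chi>}" for \<chi>
      by blast
    have l: "sat M w (DGAnn (- G) \<psi> \<phi>) \<longleftrightarrow> (sat_el M w \<psi> \<longrightarrow>
        (\<exists>\<chi>\<in>ELG (- G). sat_el M w \<chi> \<and> sat (restrict M {v. sat_el M v \<psi> \<and> sat_el M v \<chi>}) w \<phi>))"
      unfolding DGAnn_def by (simp add: e[OF h] s)
    show ?thesis
    proof (cases "sat_el M w \<psi>")
      case True then show ?thesis using l by simp
    next
      case False then show ?thesis using l c0 by blast
    qed
  qed
  show ?thesis
  proof
    assume L: "sat M w (CoAnn G \<phi>)"
    show "\<forall>\<psi>\<in>ELG G. sat M w (DGAnn (- G) \<psi> \<phi>)"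
    proof
      fix \<psi> :: "('a, 'p) fm" assume h: "\<psi> \<in> ELG G"
      have "\<exists>\<chi> \<in> ELG (- G). sat_el M w \<psi> \<longrightarrow>
           (sat_el M w \<psi> \<and> sat_el M w \<chi> \<and>
            sat (restrict M {v. sat_el M v \<psi> \<and> sat_el M v \<chi>}) w \<phi>)" using L h by simp
      then show "sat M w (DGAnn (- G) \<psi> \<phi>)" using p[OF h] by blast
    qed
  next
    assume R: "\<forall>\<psi>\<in>ELG G. sat M w (DGAnn (- G) \<psi> \<phi>)"
    have "\<forall>\<psi>\<in>ELG G. \<exists>\<chi> \<in> ELG (- G). sat_el M w \<psi> \<longrightarrow>
           (sat_el M w \<psi> \<and> sat_el M w \<chi> \<and>
            sat (restrict M {v. sat_el M v \<psi> \<and> sat_el M v \<chi>}) w \<phi>)"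
    proof
      fix \<psi> :: "('a, 'p) fm" assume h: "\<psi> \<in> ELG G"
      show "\<exists>\<chi> \<in> ELG (- G). sat_el M w \<psi> \<longrightarrow>
           (sat_el M w \<psi> \<and> sat_el M w \<chi> \<and>
            sat (restrict M {v. sat_el M v \<psi> \<and> sat_el M v \<chi>}) w \<phi>)" using R h p[OF h] by blast
    qed
    then show "sat M w (CoAnn G \<phi>)" by simp
  qed
qed

lemma S_Atom: "sat M w (Ann \<theta> (Atom p)) \<longleftrightarrow> (sat M w \<theta> \<longrightarrow> w \<in> V M p)"
  by (auto simp: restrict_def)
lemma S_Neg: "sat M w (Ann \<theta> (Neg \<phi>)) \<longleftrightarrow> (sat M w \<theta> \<longrightarrow> \<not> sat M w (Ann \<theta> \<phi>))"
  by auto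
lemma S_Conj: "sat M w (Ann \<theta> (Conj a b)) \<longleftrightarrow> (sat M w (Ann \<theta> a) \<and> sat M w (Ann \<theta> b))"
  by auto
lemma S_K: "sat M w (Ann \<theta> (K a \<phi>)) \<longleftrightarrow> (sat M w \<theta> \<longrightarrow> sat M w (K a (Ann \<theta> \<phi>)))"
  by (auto simp: restrict_def)
lemma S_Ann: "sat M w (Ann \<theta> (Ann \<psi> \<chi>)) \<longleftrightarrow> sat M w (Ann (Conj \<theta> (Ann \<theta> \<psi>)) \<chi>)"
proof -
  have e: "{v. sat M v \<theta>} \<inter> {v. sat (restrict M {v. sat M v \<theta>}) v \<psi>} = {v. sat M v (Conj \<theta> (Ann \<theta> \<psi>))}"
    by auto
  show ?thesis by (simp add: restrict_restrict e del: sat.simps(3)) (auto)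
qed
lemma S_GAnn:
  fixes M :: "('a::{finite,linorder}, 'p, 'w) model"
  shows "sat M w (Ann \<theta> (GAnn G \<chi> \<phi>)) \<longleftrightarrow> (\<forall>\<psi>\<in>ELG G. sat M w (Ann \<theta> (Conj \<chi> (Ann (Conj \<psi> \<chi>) \<phi>))))"
proof -
  let ?N = "restrict M {v. sat M v \<theta>}"
  have a: "sat ?N w (GAnn G \<chi> \<phi>) \<longleftrightarrow> (\<forall>\<psi>\<in>ELG G. sat ?N w (Conj \<chi> (Ann (Conj \<psi> \<chi>) \<phi>)))" by (rule S_GAnn0)
  obtain \<psi>0 :: "('a, 'p) fm" where "\<psi>0 \<in> ELG G" using ELG_ne by blast
  then show ?thesis unfolding sat.simps(5)[of M w \<theta>] using a by blast
qed

lemma S_CoAnn: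
  fixes M :: "('a::{finite,linorder}, 'p, 'w) model"
  shows "sat M w (Ann \<theta> (CoAnn G \<phi>)) \<longleftrightarrow> (\<forall>\<psi>\<in>ELG G. sat M w (Ann \<theta> (DGAnn (- G) \<psi> \<phi>)))"
proof -
  let ?N = "restrict M {v. sat M v \<theta>}"
  have a: "sat ?N w (CoAnn G \<phi>) \<longleftrightarrow> (\<forall>\<psi>\<in>ELG G. sat ?N w (DGAnn (- G) \<psi> \<phi>))" by (rule S_CoAnn0)
  obtain \<psi>0 :: "('a, 'p) fm" where "\<psi>0 \<in> ELG G" using ELG_ne by blast
  then show ?thesis unfolding sat.simps(5)[of M w \<theta>] using a by blast
qed

section \<open>Canonical model and truth lemma\<close>

definition Mc :: "('a::{finite,linorder}, 'p::countable, ('a, 'p) fm set) model" where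
  "Mc = \<lparr>W = {\<Gamma>. mcs \<Gamma>}, R = (\<lambda>a. {(\<Gamma>, \<Delta>). mcs \<Gamma> \<and> mcs \<Delta> \<and> (\<forall>\<phi>. K a \<phi> \<in> \<Gamma> \<longrightarrow> \<phi> \<in> \<Delta>)}),
     V = (\<lambda>p. {\<Gamma>. Atom p \<in> \<Gamma>})\<rparr>"

lemma Mc_simps: "W Mc = {\<Gamma>. mcs \<Gamma>}"
  "R Mc a = {(\<Gamma>, \<Delta>). mcs \<Gamma> \<and> mcs \<Delta> \<and> (\<forall>\<phi>. K a \<phi> \<in> \<Gamma> \<longrightarrow> \<phi> \<in> \<Delta>)}"
  "V Mc p = {\<Gamma>. Atom p \<in> \<Gamma>}"
  by (simp_all add: Mc_def)

fun dd :: "('a, 'p) fm \<Rightarrow> nat" where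
  "dd (Atom p) = 0"
| "dd (Neg a) = dd a"
| "dd (Conj a b) = max (dd a) (dd b)"
| "dd (K i a) = dd a"
| "dd (Ann a b) = dd a + dd b"
| "dd (GAnn G a b) = dd a + dd b + 1"
| "dd (CoAnn G a) = dd a + 2"

fun cc :: "('a, 'p) fm \<Rightarrow> nat" where
  "cc (Atom p) = 1"
| "cc (Neg a) = 1 + cc a"
| "cc (Conj a b) = 1 + max (cc a) (cc b)"
| "cc (K i a) = 1 + cc a"
| "cc (Ann a b) = (4 + cc a) * cc b"
| "cc (GAnn G a b) = 1"
| "cc (CoAnn G a) = 1"

lemma cc_pos: "1 \<le> cc \<phi>"
  by (induction \<phi>) auto

lemma dd_EL: "is_EL \<psi> \<Longrightarrow> dd \<psi> = 0"
  by (induction \<psi>) auto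

definition rel :: "(('a, 'p) fm \<times> ('a, 'p) fm) set" where
  "rel = inv_image (less_than <*lex*> less_than) (\<lambda>\<phi>. (dd \<phi>, cc \<phi>))"

lemma wf_rel: "wf rel" unfolding rel_def by auto

lemma relI1: "dd a < dd b \<Longrightarrow> (a, b) \<in> rel" by (simp add: rel_def)
lemma relI2: "dd a \<le> dd b \<Longrightarrow> cc a < cc b \<Longrightarrow> (a, b) \<in> rel" by (auto simp add: rel_def)

lemma K_witness:
  fixes \<Gamma> :: "('a::{finite,linorder}, 'p::countable) fm set"
  assumes G: "mcs \<Gamma>" and nk: "K a \<psi> \<notin> \<Gamma>"
  shows "\<exists>\<Delta>. mcs \<Delta> \<and> (\<forall>\<phi>. K a \<phi> \<in> \<Gamma> \<longrightarrow> \<phi> \<in> \<Delta>) \<and> \<psi> \<notin> \<Delta>"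
proof -
  define T where "T = {\<phi>. K a \<phi> \<in> \<Gamma>}"
  have kmp: "K a y \<in> \<Gamma>" if "K a x \<in> \<Gamma>" "K a (Imp x y) \<in> \<Gamma>" for x y
    using mcs_cr[OF G A1[of a x y]] that mcs_imp[OF G] by blast
  have th: "isth T"
    unfolding isth_def
  proof (intro conjI allI impI)
    fix \<phi> :: "('a, 'p) fm" assume "CoRGAL \<phi>" then show "\<phi> \<in> T" unfolding T_def using R1 mcs_thm[OF G] by blast
  next
    fix \<phi> \<chi> :: "('a, 'p) fm" assume "\<phi> \<in> T" "Imp \<phi> \<chi> \<in> T" then show "\<chi> \<in> T" unfolding T_def using kmp by blast
  next
    fix G' :: "'a set" and \<eta> :: "('a, 'p) nform" and \<chi> \<phi> :: "('a, 'p) fm" assume "\<forall>\<psi>\<in>ELG G'. fill \<eta> (Conj \<chi> (Ann (Conj \<psi> \<chi>) \<phi>)) \<in> T"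
    then have "\<forall>\<psi>\<in>ELG G'. fill (NK a \<eta>) (Conj \<chi> (Ann (Conj \<psi> \<chi>) \<phi>)) \<in> \<Gamma>" unfolding T_def by simp
    then have "fill (NK a \<eta>) (GAnn G' \<chi> \<phi>) \<in> \<Gamma>" using th_r5 G mcs_def by blast
    then show "fill \<eta> (GAnn G' \<chi> \<phi>) \<in> T" unfolding T_def by simp
  next
    fix G' :: "'a set" and \<eta> :: "('a, 'p) nform" and \<phi> :: "('a, 'p) fm" assume "\<forall>\<psi>\<in>ELG G'. fill \<eta> (DGAnn (- G') \<psi> \<phi>) \<in> T"
    then have "\<forall>\<psi>\<in>ELG G'. fill (NK a \<eta>) (DGAnn (- G') \<psi> \<phi>) \<in> \<Gamma>" unfolding T_def by simp
    then have "fill (NK a \<eta>) (CoAnn G' \<phi>) \<in> \<Gamma>" using th_r6 G mcs_def by blast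
    then show "fill \<eta> (CoAnn G' \<phi>) \<in> T" unfolding T_def by simp
  qed
  have cons: "consistent (ext T (Neg \<psi>))"
  proof (rule ccontr)
    assume "\<not> consistent (ext T (Neg \<psi>))"
    then have "Neg (Neg \<psi>) \<in> T" using ext_incons[OF th] by blast
    then have k: "K a (Neg (Neg \<psi>)) \<in> \<Gamma>" unfolding T_def by simp
    have "CoRGAL (K a (Imp (Neg (Neg \<psi>)) \<psi>))" by (rule R1, rule A0) (simp add: tautology_def)
    then have "K a (Imp (Neg (Neg \<psi>)) \<psi>) \<in> \<Gamma>" using mcs_thm[OF G] by blast
    then have "K a \<psi> \<in> \<Gamma>" using kmp k by blast
    then show False using nk by blast
  qed
  obtain \<Delta> where D: "mcs \<Delta>" "ext T (Neg \<psi>) \<subseteq> \<Delta>"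
    using lindenbaum[OF ext_theory[OF th] cons] by blast
  have "T \<subseteq> \<Delta>" using ext_sub[OF th] D(2) by blast
  moreover have "Neg \<psi> \<in> \<Delta>" using ext_mem[OF th] D(2) by blast
  ultimately show ?thesis using D(1) mcs_neg[OF D(1)] unfolding T_def by blast
qed

lemma aux1: "(4 + t) * (a::nat) < (4 + t) * (1 + a)" by simp
lemma aux2: "(4 + t) * (a::nat) < (4 + t) * (1 + max a b)" by (rule mult_less_mono2) auto
lemma aux3: "(4 + t) * (b::nat) < (4 + t) * (1 + max a b)" by (rule mult_less_mono2) auto
lemma aux4: "1 + (4 + t) * (a::nat) < (4 + t) * (1 + a)" by (simp add: algebra_simps)

lemma mult_aux: "1 \<le> (c::nat) \<Longrightarrow> (x::nat) < y \<Longrightarrow> x * c < y * c" by simp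

lemma truth:
  fixes \<phi> :: "('a::{finite,linorder}, 'p::countable) fm"
  shows "\<forall>\<Gamma>. mcs \<Gamma> \<longrightarrow> (sat Mc \<Gamma> \<phi> \<longleftrightarrow> \<phi> \<in> \<Gamma>)"
proof (induction \<phi> rule: wf_induct_rule[OF wf_rel])
  case (1 \<phi>)
  have IH: "sat Mc \<Gamma> y \<longleftrightarrow> y \<in> \<Gamma>" if "(y, \<phi>) \<in> rel" "mcs \<Gamma>" for y \<Gamma> using 1 that by blast
  show ?case
  proof (intro allI impI)
    fix \<Gamma> :: "('a, 'p) fm set" assume G: "mcs \<Gamma>"
    have th: "isth \<Gamma>" using G mcs_def by blast
    show "sat Mc \<Gamma> \<phi> \<longleftrightarrow> \<phi> \<in> \<Gamma>"
    proof (cases \<phi>)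
      case (Atom p) then show ?thesis by (simp add: Mc_simps)
    next
      case (Neg a)
      have r: "(a, \<phi>) \<in> rel" by (insert Neg, rule relI2) auto
      show ?thesis unfolding Neg using IH[OF r G] mcs_neg[OF G, of a] by simp
    next
      case (Conj a b)
      have r: "(a, \<phi>) \<in> rel" "(b, \<phi>) \<in> rel" by (insert Conj, rule relI2; auto)+
      show ?thesis unfolding Conj using IH[OF r(1) G] IH[OF r(2) G] mcs_conj[OF G, of a b] by simp
    next
      case (K a \<psi>)
      have r: "(\<psi>, \<phi>) \<in> rel" by (insert K, rule relI2) auto
      show ?thesis
      proof
        assume s: "sat Mc \<Gamma> \<phi>"
        show "\<phi> \<in> \<Gamma>"
        proof (rule ccontr)
          assume "\<phi> \<notin> \<Gamma>"
          then obtain \<Delta> where D: "mcs \<Delta>" "\<forall>\<chi>. K a \<chi> \<in> \<Gamma> \<longrightarrow> \<chi> \<in> \<Delta>" "\<psi> \<notin> \<Delta>"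
            using K_witness[OF G] K by blast
          have "(\<Gamma>, \<Delta>) \<in> R Mc a" using G D by (simp add: Mc_simps)
          then have "sat Mc \<Delta> \<psi>" using s K by simp
          then show False using IH[OF r D(1)] D(3) by blast
        qed
      next
        assume m: "\<phi> \<in> \<Gamma>"
        have "sat Mc \<Delta> \<psi>" if "(\<Gamma>, \<Delta>) \<in> R Mc a" for \<Delta>
        proof -
          from that have D: "mcs \<Delta>" "\<forall>\<chi>. K a \<chi> \<in> \<Gamma> \<longrightarrow> \<chi> \<in> \<Delta>" by (simp_all add: Mc_simps)
          then have "\<psi> \<in> \<Delta>" using m K by blast
          then show ?thesis using IH[OF r D(1)] by blast
        qed
        then show "sat Mc \<Gamma> \<phi>" using K by simp
      qed
    next
      case (Ann \<theta> X)
      have cX: "1 \<le> cc X" by (rule cc_pos)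
      have "(4 + cc \<theta>) * 1 \<le> (4 + cc \<theta>) * cc X" by (rule mult_le_mono2[OF cX])
      then have "4 + cc \<theta> \<le> (4 + cc \<theta>) * cc X" by simp
      then have "cc \<theta> < cc \<phi>" unfolding Ann cc.simps by linarith
      then have r\<theta>: "(\<theta>, \<phi>) \<in> rel" by (rule relI2[rotated]) (simp add: Ann)
      show ?thesis
      proof (cases "\<theta> \<in> \<Gamma>")
        case False
        then have "Neg \<theta> \<in> \<Gamma>" using mcs_neg[OF G] by blast
        then have "Ann \<theta> X \<in> \<Gamma>" using mcs_cr[OF G L1] by blast
        moreover have "\<not> sat Mc \<Gamma> \<theta>" using IH[OF r\<theta> G] False by blast
        ultimately show ?thesis using Ann by simp
      next
        case True
        have s\<theta>: "sat Mc \<Gamma> \<theta>" using IH[OF r\<theta> G] True by blast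
        show ?thesis
        proof (cases X)
          case (Atom p)
          have mem: "Ann \<theta> (Atom p) \<in> \<Gamma> \<longleftrightarrow> Atom p \<in> \<Gamma>"
            using mcs_iff[OF G A5[of \<theta> p]] mcs_imp[OF G] True by blast
          have "sat Mc \<Gamma> (Ann \<theta> (Atom p)) \<longleftrightarrow> Atom p \<in> \<Gamma>"
            using S_Atom[of Mc \<Gamma> \<theta> p, unfolded Mc_simps(3)] s\<theta> by blast
          then show ?thesis unfolding Ann Atom using mem by blast
        next
          case (Neg b)
          have "(Ann \<theta> b, \<phi>) \<in> rel" by (rule relI2) (simp add: Ann Neg, simp only: Ann Neg cc.simps aux1)
          then have i: "sat Mc \<Gamma> (Ann \<theta> b) \<longleftrightarrow> Ann \<theta> b \<in> \<Gamma>" using IH G by blast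
          have "Ann \<theta> (Neg b) \<in> \<Gamma> \<longleftrightarrow> Ann \<theta> b \<notin> \<Gamma>"
            using mcs_iff[OF G A6[of \<theta> b]] mcs_imp[OF G] mcs_neg[OF G] True by blast
          then show ?thesis unfolding Ann Neg using i S_Neg[of Mc \<Gamma> \<theta> b] s\<theta> by blast
        next
          case (Conj b1 b2)
          have "(Ann \<theta> b1, \<phi>) \<in> rel" by (rule relI2) (simp add: Ann Conj, simp only: Ann Conj cc.simps aux2)
          moreover have "(Ann \<theta> b2, \<phi>) \<in> rel" by (rule relI2) (simp add: Ann Conj, simp only: Ann Conj cc.simps aux3)
          ultimately have i: "sat Mc \<Gamma> (Ann \<theta> b1) \<longleftrightarrow> Ann \<theta> b1 \<in> \<Gamma>" "sat Mc \<Gamma> (Ann \<theta> b2) \<longleftrightarrow> Ann \<theta> b2 \<in> \<Gamma>"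
            using IH G by blast+
          have "Ann \<theta> (Conj b1 b2) \<in> \<Gamma> \<longleftrightarrow> Ann \<theta> b1 \<in> \<Gamma> \<and> Ann \<theta> b2 \<in> \<Gamma>"
            using mcs_iff[OF G A7[of \<theta> b1 b2]] mcs_conj[OF G] by blast
          then show ?thesis unfolding Ann Conj using i S_Conj[of Mc \<Gamma> \<theta> b1 b2] by blast
        next
          case (K a b)
          have "(K a (Ann \<theta> b), \<phi>) \<in> rel" by (rule relI2) (simp add: Ann K, simp only: Ann K cc.simps aux4)
          then have i: "sat Mc \<Gamma> (K a (Ann \<theta> b)) \<longleftrightarrow> K a (Ann \<theta> b) \<in> \<Gamma>" using IH G by blast
          have "Ann \<theta> (K a b) \<in> \<Gamma> \<longleftrightarrow> K a (Ann \<theta> b) \<in> \<Gamma>"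
            using mcs_iff[OF G A8[of \<theta> a b]] mcs_imp[OF G] True by blast
          then show ?thesis unfolding Ann K using i S_K[of Mc \<Gamma> \<theta> a b] s\<theta> by blast
        next
          case (Ann \<psi> \<chi>)
          note A = Ann
          have c\<chi>: "1 \<le> cc \<chi>" "1 \<le> cc \<psi>" by (rule cc_pos)+
          have "(Ann (Conj \<theta> (Ann \<theta> \<psi>)) \<chi>, \<phi>) \<in> rel"
          proof (rule relI2)
            show "dd (Ann (Conj \<theta> (Ann \<theta> \<psi>)) \<chi>) \<le> dd \<phi>" using \<open>\<phi> = Ann \<theta> X\<close> A by simp
            have m0: "4 + cc \<theta> \<le> (4 + cc \<theta>) * cc \<psi>"
              using mult_le_mono2[OF c\<chi>(2), of "4 + cc \<theta>"] by (simp only: mult_1_right)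
            then have "cc \<theta> \<le> (4 + cc \<theta>) * cc \<psi>" by linarith
            then have m: "max (cc \<theta>) ((4 + cc \<theta>) * cc \<psi>) = (4 + cc \<theta>) * cc \<psi>" by (rule max_absorb2)
            have "5 + (4 + cc \<theta>) * cc \<psi> < (4 + cc \<theta>) * (4 + cc \<psi>)" by (simp add: algebra_simps)
            then have lt: "(5 + (4 + cc \<theta>) * cc \<psi>) * cc \<chi> < ((4 + cc \<theta>) * (4 + cc \<psi>)) * cc \<chi>"
              by (rule mult_aux[OF c\<chi>(1)])
            have lhs: "cc (Ann (Conj \<theta> (Ann \<theta> \<psi>)) \<chi>) = (5 + (4 + cc \<theta>) * cc \<psi>) * cc \<chi>"
              by (simp only: cc.simps m) simp
            have rhs: "cc \<phi> = ((4 + cc \<theta>) * (4 + cc \<psi>)) * cc \<chi>"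
              unfolding \<open>\<phi> = Ann \<theta> X\<close> A cc.simps by (simp only: mult.assoc)
            show "cc (Ann (Conj \<theta> (Ann \<theta> \<psi>)) \<chi>) < cc \<phi>" unfolding lhs rhs by (rule lt)
          qed
          then have i: "sat Mc \<Gamma> (Ann (Conj \<theta> (Ann \<theta> \<psi>)) \<chi>) \<longleftrightarrow> Ann (Conj \<theta> (Ann \<theta> \<psi>)) \<chi> \<in> \<Gamma>" using IH G by blast
          have "Ann \<theta> (Ann \<psi> \<chi>) \<in> \<Gamma> \<longleftrightarrow> Ann (Conj \<theta> (Ann \<theta> \<psi>)) \<chi> \<in> \<Gamma>"
            using mcs_iff[OF G A9[of \<theta> \<psi> \<chi>]] by blast
          then show ?thesis unfolding \<open>\<phi> = Ann \<theta> X\<close> A using i S_Ann[of Mc \<Gamma> \<theta> \<psi> \<chi>] by blast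
        next
          case (GAnn G' \<chi> \<phi>')
          have i: "sat Mc \<Gamma> (Ann \<theta> (Conj \<chi> (Ann (Conj \<psi> \<chi>) \<phi>'))) \<longleftrightarrow> Ann \<theta> (Conj \<chi> (Ann (Conj \<psi> \<chi>) \<phi>')) \<in> \<Gamma>"
            if "\<psi> \<in> ELG G'" for \<psi>
          proof -
            have d0: "dd \<psi> = 0" by (rule dd_EL[OF ELG_EL[OF that]])
            have "(Ann \<theta> (Conj \<chi> (Ann (Conj \<psi> \<chi>) \<phi>')), \<phi>) \<in> rel" by (insert d0 Ann GAnn, rule relI1) auto
            then show ?thesis using IH G by blast
          qed
          have m: "Ann \<theta> (GAnn G' \<chi> \<phi>') \<in> \<Gamma> \<longleftrightarrow> (\<forall>\<psi>\<in>ELG G'. Ann \<theta> (Conj \<chi> (Ann (Conj \<psi> \<chi>) \<phi>')) \<in> \<Gamma>)"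
          proof
            assume "Ann \<theta> (GAnn G' \<chi> \<phi>') \<in> \<Gamma>"
            then show "\<forall>\<psi>\<in>ELG G'. Ann \<theta> (Conj \<chi> (Ann (Conj \<psi> \<chi>) \<phi>')) \<in> \<Gamma>"
              using mcs_ann_cr[OF G True A10] by blast
          next
            assume "\<forall>\<psi>\<in>ELG G'. Ann \<theta> (Conj \<chi> (Ann (Conj \<psi> \<chi>) \<phi>')) \<in> \<Gamma>"
            then show "Ann \<theta> (GAnn G' \<chi> \<phi>') \<in> \<Gamma>" using th_r5[OF th, of G' "NAnn \<theta> Hole" \<chi> \<phi>'] by simp
          qed
          show ?thesis unfolding \<open>\<phi> = Ann \<theta> X\<close> GAnn using i m S_GAnn[of Mc \<Gamma> \<theta> G' \<chi> \<phi>'] by blast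
        next
          case (CoAnn G' \<phi>')
          have i: "sat Mc \<Gamma> (Ann \<theta> (DGAnn (- G') \<psi> \<phi>')) \<longleftrightarrow> Ann \<theta> (DGAnn (- G') \<psi> \<phi>') \<in> \<Gamma>"
            if "\<psi> \<in> ELG G'" for \<psi>
          proof -
            have d0: "dd \<psi> = 0" by (rule dd_EL[OF ELG_EL[OF that]])
            have "(Ann \<theta> (DGAnn (- G') \<psi> \<phi>'), \<phi>) \<in> rel" by (insert d0 Ann CoAnn, rule relI1) (auto simp: DGAnn_def)
            then show ?thesis using IH G by blast
          qed
          have m: "Ann \<theta> (CoAnn G' \<phi>') \<in> \<Gamma> \<longleftrightarrow> (\<forall>\<psi>\<in>ELG G'. Ann \<theta> (DGAnn (- G') \<psi> \<phi>') \<in> \<Gamma>)"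
          proof
            assume "Ann \<theta> (CoAnn G' \<phi>') \<in> \<Gamma>"
            then show "\<forall>\<psi>\<in>ELG G'. Ann \<theta> (DGAnn (- G') \<psi> \<phi>') \<in> \<Gamma>"
              using mcs_ann_cr[OF G True A11] by blast
          next
            assume "\<forall>\<psi>\<in>ELG G'. Ann \<theta> (DGAnn (- G') \<psi> \<phi>') \<in> \<Gamma>"
            then show "Ann \<theta> (CoAnn G' \<phi>') \<in> \<Gamma>" using th_r6[OF th, of G' "NAnn \<theta> Hole" \<phi>'] by simp
          qed
          show ?thesis unfolding \<open>\<phi> = Ann \<theta> X\<close> CoAnn using i m S_CoAnn[of Mc \<Gamma> \<theta> G' \<phi>'] by blast
        qed
      qed
    next
      case (GAnn G' \<chi> \<phi>')
      have i: "sat Mc \<Gamma> (Conj \<chi> (Ann (Conj \<psi> \<chi>) \<phi>')) \<longleftrightarrow> Conj \<chi> (Ann (Conj \<psi> \<chi>) \<phi>') \<in> \<Gamma>"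
        if "\<psi> \<in> ELG G'" for \<psi>
      proof -
        have d0: "dd \<psi> = 0" by (rule dd_EL[OF ELG_EL[OF that]])
        have "(Conj \<chi> (Ann (Conj \<psi> \<chi>) \<phi>'), \<phi>) \<in> rel" by (insert d0 GAnn, rule relI1) auto
        then show ?thesis using IH G by blast
      qed
      have m: "GAnn G' \<chi> \<phi>' \<in> \<Gamma> \<longleftrightarrow> (\<forall>\<psi>\<in>ELG G'. Conj \<chi> (Ann (Conj \<psi> \<chi>) \<phi>') \<in> \<Gamma>)"
      proof
        assume "GAnn G' \<chi> \<phi>' \<in> \<Gamma>"
        then show "\<forall>\<psi>\<in>ELG G'. Conj \<chi> (Ann (Conj \<psi> \<chi>) \<phi>') \<in> \<Gamma>"
          using mcs_cr[OF G A10] by blast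
      next
        assume "\<forall>\<psi>\<in>ELG G'. Conj \<chi> (Ann (Conj \<psi> \<chi>) \<phi>') \<in> \<Gamma>"
        then show "GAnn G' \<chi> \<phi>' \<in> \<Gamma>" using th_r5[OF th, of G' Hole \<chi> \<phi>'] by simp
      qed
      show ?thesis unfolding GAnn using i m S_GAnn0[of Mc \<Gamma> G' \<chi> \<phi>'] by blast
    next
      case (CoAnn G' \<phi>')
      have i: "sat Mc \<Gamma> (DGAnn (- G') \<psi> \<phi>') \<longleftrightarrow> DGAnn (- G') \<psi> \<phi>' \<in> \<Gamma>"
        if "\<psi> \<in> ELG G'" for \<psi>
      proof -
        have d0: "dd \<psi> = 0" by (rule dd_EL[OF ELG_EL[OF that]])
        have "(DGAnn (- G') \<psi> \<phi>', \<phi>) \<in> rel" by (insert d0 CoAnn, rule relI1) (auto simp: DGAnn_def)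
        then show ?thesis using IH G by blast
      qed
      have m: "CoAnn G' \<phi>' \<in> \<Gamma> \<longleftrightarrow> (\<forall>\<psi>\<in>ELG G'. DGAnn (- G') \<psi> \<phi>' \<in> \<Gamma>)"
      proof
        assume "CoAnn G' \<phi>' \<in> \<Gamma>"
        then show "\<forall>\<psi>\<in>ELG G'. DGAnn (- G') \<psi> \<phi>' \<in> \<Gamma>"
          using mcs_cr[OF G A11] by blast
      next
        assume "\<forall>\<psi>\<in>ELG G'. DGAnn (- G') \<psi> \<phi>' \<in> \<Gamma>"
        then show "CoAnn G' \<phi>' \<in> \<Gamma>" using th_r6[OF th, of G' Hole \<phi>'] by simp
      qed
      show ?thesis unfolding CoAnn using i m S_CoAnn0[of Mc \<Gamma> G' \<phi>'] by blast
    qed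
  qed
qed

lemma Mc_model:
  fixes \<Gamma>0 :: "('a::{finite,linorder}, 'p::countable) fm set"
  assumes "mcs \<Gamma>0" shows "is_model (Mc :: ('a::{finite,linorder}, 'p::countable, ('a, 'p) fm set) model)"
  unfolding is_model_def
proof (intro conjI allI)
  show "W (Mc :: ('a, 'p, ('a, 'p) fm set) model) \<noteq> {}" using assms by (auto simp: Mc_simps)
next
  fix a
  show "equiv (W (Mc :: ('a, 'p, ('a, 'p) fm set) model)) (R Mc a)"
  proof (rule equivI)
    show "R Mc a \<subseteq> W Mc \<times> W (Mc :: ('a, 'p, ('a, 'p) fm set) model)" by (auto simp: Mc_simps)
  next
    show "refl_on (W Mc) (R (Mc :: ('a, 'p, ('a, 'p) fm set) model) a)"
      unfolding refl_on_def Mc_simps using mcs_cr A2 by blast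
  next
    show "sym (R (Mc :: ('a, 'p, ('a, 'p) fm set) model) a)"
    proof (rule symI)
      fix \<Gamma> \<Delta> assume "(\<Gamma>, \<Delta>) \<in> R (Mc :: ('a, 'p, ('a, 'p) fm set) model) a"
      then have G: "mcs \<Gamma>" and D: "mcs \<Delta>" and k: "\<forall>\<phi>. K a \<phi> \<in> \<Gamma> \<longrightarrow> \<phi> \<in> \<Delta>" by (auto simp: Mc_simps)
      have "\<phi> \<in> \<Gamma>" if "K a \<phi> \<in> \<Delta>" for \<phi>
      proof (rule ccontr)
        assume "\<phi> \<notin> \<Gamma>"
        then have "K a \<phi> \<notin> \<Gamma>" using mcs_cr[OF G A2] by blast
        then have "Neg (K a \<phi>) \<in> \<Gamma>" using mcs_neg[OF G] by blast
        then have "K a (Neg (K a \<phi>)) \<in> \<Gamma>" using mcs_cr[OF G A4] by blast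
        then have "Neg (K a \<phi>) \<in> \<Delta>" using k by blast
        then show False using that mcs_neg[OF D] by blast
      qed
      then show "(\<Delta>, \<Gamma>) \<in> R Mc a" using G D by (auto simp: Mc_simps)
    qed
  next
    show "trans (R (Mc :: ('a, 'p, ('a, 'p) fm set) model) a)"
    proof (rule transI)
      fix x y z assume "(x, y) \<in> R (Mc :: ('a, 'p, ('a, 'p) fm set) model) a" "(y, z) \<in> R (Mc :: ('a, 'p, ('a, 'p) fm set) model) a"
      then show "(x, z) \<in> R (Mc :: ('a, 'p, ('a, 'p) fm set) model) a"
        using mcs_cr[OF _ A3] by (simp add: Mc_simps) blast
    qed
  qed
qed

theorem mainTheorem15:
  fixes \<phi> :: "('a :: {finite, linorder}, 'p :: countable) fm"
  assumes "valid \<phi>"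
  shows "CoRGAL \<phi>"
proof (rule ccontr)
  assume n\<phi>: "\<not> CoRGAL \<phi>"
  define T0 where "T0 = {x :: ('a, 'p) fm. CoRGAL x}"
  have th: "isth T0" unfolding isth_def T0_def using R0 R5 R6 by blast
  have cons: "consistent (ext T0 (Neg \<phi>))"
  proof (rule ccontr)
    assume "\<not> consistent (ext T0 (Neg \<phi>))"
    then have "Neg (Neg \<phi>) \<in> T0" using ext_incons[OF th] by blast
    then have "CoRGAL (Neg (Neg \<phi>))" by (simp add: T0_def)
    then have "CoRGAL \<phi>" by (rule cr_taut1[rotated]) (simp add: tautology_def)
    then show False using n\<phi> by blast
  qed
  obtain \<Gamma> where G: "mcs \<Gamma>" "ext T0 (Neg \<phi>) \<subseteq> \<Gamma>" using lindenbaum[OF ext_theory[OF th] cons] by blast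
  have "Neg \<phi> \<in> \<Gamma>" using ext_mem[OF th] G(2) by blast
  then have "\<phi> \<notin> \<Gamma>" using mcs_neg[OF G(1)] by blast
  then have "\<not> sat Mc \<Gamma> \<phi>" using truth G(1) by blast
  moreover have "sat Mc \<Gamma> \<phi>" using assms Mc_model[OF G(1)] G(1) unfolding valid_def by (simp add: Mc_simps)
  ultimately show False by blast
qed

end
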